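(* Let $\bar\eta>0$ be as in the setting below. For every $\eta_2\ge\bar\eta$, every $0\le\epsilon\le1/2$ and every $0<\bar\epsilon\le1$, the solution $\phi(\cdot;\eta_2,\epsilon,-\bar\epsilon)$ satisfies $\phi(\xi;\eta_2,\epsilon,-\bar\epsilon)<1$ for all $\xi\in[\bar\eta,\eta_2]$ belonging to its maximal existence interval.
   Context: Fix $d>2$. Define $f(\eta,v,w)=\frac{d+1}{\eta}w-\frac\eta2 w+\frac1d\eta v w+v^2-v$. For $(\eta_0,v_0,w_0)$ with $\eta_0>0$, $\phi(\xi;\eta_0,v_0,w_0)$ denotes the solution of $\phi''+f(\xi,\phi,\phi')=0$ with $\phi(\eta_0)=v_0$, $\phi'(\eta_0)=w_0$. $\bar\eta>0$ is a number such that for every $\eta_1\ge\bar\eta$, every solution $\phi$ of $\phi''+f(\xi,\phi,\phi')=0$ with $\phi(\eta_1)=1$, $\phi'(\eta_1)\le0$ satisfies $\phi'(\eta_2)<-1$ for all $\eta_2>\eta_1$ with $\phi(\eta_2)\in[0,1/2]$ (such $\bar\eta$ exists). *)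

theory Defs
  imports "HOL-Analysis.Analysis"
begin

definition fA :: "real \<Rightarrow> real \<Rightarrow> real \<Rightarrow> real \<Rightarrow> real" where
  "fA d \<eta> v w = (d + 1) / \<eta> * w - \<eta> / 2 * w + 1 / d * \<eta> * v * w + v^2 - v"

definition is_sol :: "real \<Rightarrow> real set \<Rightarrow> (real \<Rightarrow> real) \<Rightarrow> bool" where
  "is_sol d I \<phi> \<longleftrightarrow> is_interval I \<and> open I \<and> I \<subseteq> {0<..} \<and>
     (\<forall>x\<in>I. (\<phi> has_real_derivative deriv \<phi> x) (at x) \<and>
             (deriv \<phi> has_real_derivative - fA d x (\<phi> x) (deriv \<phi> x)) (at x))"

definition eta_bar_prop :: "real \<Rightarrow> real \<Rightarrow> bool" where
  "eta_bar_prop d \<eta>b \<longleftrightarrow> \<eta>b > 0 \<and>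
     (\<forall>\<eta>1 I \<phi>. \<eta>1 \<ge> \<eta>b \<and> is_sol d I \<phi> \<and> \<eta>1 \<in> I \<and> \<phi> \<eta>1 = 1 \<and> deriv \<phi> \<eta>1 \<le> 0 \<longrightarrow>
        (\<forall>\<eta>2\<in>I. \<eta>2 > \<eta>1 \<and> 0 \<le> \<phi> \<eta>2 \<and> \<phi> \<eta>2 \<le> 1/2 \<longrightarrow> deriv \<phi> \<eta>2 < -1))"

end

theory Submission
  imports Defs
begin

theorem corollaryA3:
  fixes d \<eta>b :: real
  assumes "d > 2"
    and "eta_bar_prop d \<eta>b"
  shows "\<forall>\<eta>2 \<epsilon> \<epsilon>b I \<phi>. \<eta>2 \<ge> \<eta>b \<and> 0 \<le> \<epsilon> \<and> \<epsilon> \<le> 1/2 \<and> 0 < \<epsilon>b \<and> \<epsilon>b \<le> 1 \<and>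
      is_sol d I \<phi> \<and> \<eta>2 \<in> I \<and> \<phi> \<eta>2 = \<epsilon> \<and> deriv \<phi> \<eta>2 = - \<epsilon>b \<longrightarrow>
      (\<forall>\<xi>\<in>I. \<eta>b \<le> \<xi> \<and> \<xi> \<le> \<eta>2 \<longrightarrow> \<phi> \<xi> < 1)"
proof (intro allI impI ballI)
  fix \<eta>2 \<epsilon> \<epsilon>b I \<phi> \<xi>
  assume H: "\<eta>2 \<ge> \<eta>b \<and> 0 \<le> \<epsilon> \<and> \<epsilon> \<le> 1/2 \<and> 0 < \<epsilon>b \<and> \<epsilon>b \<le> 1 \<and>
      is_sol d I \<phi> \<and> \<eta>2 \<in> I \<and> \<phi> \<eta>2 = \<epsilon> \<and> deriv \<phi> \<eta>2 = - \<epsilon>b"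
    and xiI: "\<xi> \<in> I" and xi: "\<eta>b \<le> \<xi> \<and> \<xi> \<le> \<eta>2"
  show "\<phi> \<xi> < 1"
  proof (rule ccontr)
    assume "\<not> \<phi> \<xi> < 1"
    hence p1: "\<phi> \<xi> \<ge> 1" by simp
    have sol: "is_sol d I \<phi>" using H by blast
    have intI: "is_interval I" and der: "\<And>x. x \<in> I \<Longrightarrow> (\<phi> has_real_derivative deriv \<phi> x) (at x)"
      using sol unfolding is_sol_def by auto
    have e2I: "\<eta>2 \<in> I" using H by blast
    have sub: "{\<xi>..\<eta>2} \<subseteq> I"
    proof
      fix x assume "x \<in> {\<xi>..\<eta>2}"
      hence "\<xi> \<le> x" "x \<le> \<eta>2" by auto
      thus "x \<in> I" using intI xiI e2I unfolding is_interval_1 by blast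
    qed
    have cont: "continuous_on {\<xi>..\<eta>2} \<phi>"
      using sub der by (meson DERIV_isCont continuous_at_imp_continuous_on subsetD)
    define S where "S = {\<xi>..\<eta>2} \<inter> \<phi> -` {1..}"
    have clS: "closed S" unfolding S_def
      by (rule continuous_closed_preimage[OF cont]) auto
    have neS: "S \<noteq> {}" and bdS: "bdd_above S" using p1 xi unfolding S_def by auto
    define \<eta>1 where "\<eta>1 = Sup S"
    have e1S: "\<eta>1 \<in> S" unfolding \<eta>1_def using closed_contains_Sup[OF neS bdS clS] .
    have ub: "\<And>x. x \<in> S \<Longrightarrow> x \<le> \<eta>1" unfolding \<eta>1_def using bdS by (simp add: cSup_upper)
    have e1: "\<xi> \<le> \<eta>1" "\<eta>1 \<le> \<eta>2" "\<phi> \<eta>1 \<ge> 1" using e1S unfolding S_def by auto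
    have "\<phi> \<eta>2 \<le> 1/2" using H by simp
    hence "\<eta>1 \<noteq> \<eta>2" using e1 by auto
    hence lt: "\<eta>1 < \<eta>2" using e1 by simp
    have eq1: "\<phi> \<eta>1 = 1"
    proof (rule ccontr)
      assume "\<phi> \<eta>1 \<noteq> 1"
      hence "\<phi> \<eta>1 > 1" using e1 by simp
      moreover have "continuous_on {\<eta>1..\<eta>2} \<phi>" by (rule continuous_on_subset[OF cont]) (use e1 in auto)
      moreover have "\<phi> \<eta>2 \<le> 1" using H by simp
      ultimately obtain x where "\<eta>1 \<le> x" "x \<le> \<eta>2" "\<phi> x = 1"
        using IVT2'[of \<phi> \<eta>2 1 \<eta>1] lt by auto
      moreover hence "x \<noteq> \<eta>1" using \<open>\<phi> \<eta>1 > 1\<close> by auto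
      ultimately have "x \<in> S" "x > \<eta>1" using e1 unfolding S_def by auto
      thus False using ub by force
    qed
    have dle: "deriv \<phi> \<eta>1 \<le> 0"
    proof (rule ccontr)
      assume "\<not> deriv \<phi> \<eta>1 \<le> 0"
      hence "deriv \<phi> \<eta>1 > 0" by simp
      moreover have "\<eta>1 \<in> I" using e1 sub by auto
      ultimately obtain e where e: "e > 0" "\<And>h. 0 < h \<Longrightarrow> h < e \<Longrightarrow> \<phi> \<eta>1 < \<phi> (\<eta>1 + h)"
        using DERIV_pos_inc_right[OF der] by blast
      define h where "h = min (e/2) (\<eta>2 - \<eta>1)"
      have "0 < h" "h < e" using e lt unfolding h_def by auto
      hence "\<phi> (\<eta>1 + h) > 1" using e eq1 by fastforce
      moreover have "\<eta>1 + h \<le> \<eta>2" unfolding h_def by auto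
      ultimately have "\<eta>1 + h \<in> S" using e1 \<open>0 < h\<close> unfolding S_def by auto
      thus False using ub \<open>0 < h\<close> by force
    qed
    have c1: "\<eta>1 \<in> I" using e1 sub by auto
    have c2: "\<eta>1 \<ge> \<eta>b" using e1 xi by linarith
    have "deriv \<phi> \<eta>2 < -1"
    proof -
      have P: "\<And>\<eta>1 I \<phi>. \<eta>1 \<ge> \<eta>b \<and> is_sol d I \<phi> \<and> \<eta>1 \<in> I \<and> \<phi> \<eta>1 = 1 \<and> deriv \<phi> \<eta>1 \<le> 0 \<Longrightarrow>
        (\<forall>\<eta>2\<in>I. \<eta>2 > \<eta>1 \<and> 0 \<le> \<phi> \<eta>2 \<and> \<phi> \<eta>2 \<le> 1/2 \<longrightarrow> deriv \<phi> \<eta>2 < -1)"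
        using assms(2) unfolding eta_bar_prop_def by blast
      have "\<forall>\<eta>2\<in>I. \<eta>2 > \<eta>1 \<and> 0 \<le> \<phi> \<eta>2 \<and> \<phi> \<eta>2 \<le> 1/2 \<longrightarrow> deriv \<phi> \<eta>2 < -1"
        using P[of \<eta>1 I \<phi>] c1 c2 sol eq1 dle by blast
      moreover have "0 \<le> \<phi> \<eta>2 \<and> \<phi> \<eta>2 \<le> 1/2" using H by simp
      ultimately show ?thesis using e2I lt by blast
    qed
    thus False using H by simp
  qed
qed

end
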